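(* Let $p+q=4k$ with $k\ge1$. (i) If $p,q$ are even, $p\ge2$ and $q\ge6$, then $\mathbb{O}_{p,q}\simeq\mathbb{O}_{p+4,q-4}$. (ii) If $p,q$ are odd, $p\ge1$ and $q\ge3$, then $\mathbb{O}_{p,q}\simeq\mathbb{O}_{p+2,q-2}$. (The isomorphisms preserve the $\mathbb{Z}_2^n$-graded structure.)
   Context: $\mathbb{Z}_2=\{0,1\}$. For $p+q=n\ge3$, $\mathbb{O}_{p,q}$ is the real algebra with basis $\{u_x: x\in\mathbb{Z}_2^n\}$ and product $u_x\cdot u_y=(-1)^{f(x,y)}u_{x+y}$, where $f(x,y)=\sum_{1\le i<j<k\le n}(x_ix_jy_k+x_iy_jx_k+y_ix_jx_k)+\sum_{1\le i\le j\le n}x_iy_j+\sum_{1\le i\le p}x_iy_i$. Homogeneous elements are scalar multiples of some $u_x$. *)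

theory Defs
  imports Complex_Main
begin

text \<open>Elements of Z_2^n are boolean lists of length n; entry i (0-based) is x_(i+1).\<close>

definition Zvec :: "nat \<Rightarrow> bool list set" where
  "Zvec n = {xs. length xs = n}"

definition zadd :: "bool list \<Rightarrow> bool list \<Rightarrow> bool list" where
  "zadd xs ys = map2 (\<lambda>a b. a \<noteq> b) xs ys"

definition zbit :: "bool list \<Rightarrow> nat \<Rightarrow> nat" where
  "zbit xs i = of_bool (xs ! i)"

text \<open>The twisting function f(x,y) of O_{p,q}, n = p+q, indices shifted to 0-based.\<close>
definition twist :: "nat \<Rightarrow> nat \<Rightarrow> bool list \<Rightarrow> bool list \<Rightarrow> nat" where
  "twist p n x y =
     (\<Sum>k<n. \<Sum>j<k. \<Sum>i<j.
        zbit x i * zbit x j * zbit y k + zbit x i * zbit y j * zbit x k + zbit y i * zbit x j * zbit x k)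
   + (\<Sum>j<n. \<Sum>i\<le>j. zbit x i * zbit y j)
   + (\<Sum>i<p. zbit x i * zbit y i)"

text \<open>Elements of O_{p,q}: real coefficient functions supported on Z_2^n.\<close>
definition Oset :: "nat \<Rightarrow> (bool list \<Rightarrow> real) set" where
  "Oset n = {a. \<forall>z. z \<notin> Zvec n \<longrightarrow> a z = 0}"

definition ubasis :: "bool list \<Rightarrow> bool list \<Rightarrow> real" where
  "ubasis x = (\<lambda>z. if z = x then 1 else 0)"

text \<open>Product of O_{p,q} (n = p+q), extending u_x u_y = (-1)^f(x,y) u_(x+y) bilinearly.\<close>
definition Omul :: "nat \<Rightarrow> nat \<Rightarrow> (bool list \<Rightarrow> real) \<Rightarrow> (bool list \<Rightarrow> real) \<Rightarrow> (bool list \<Rightarrow> real)" where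
  "Omul p q a b = (\<lambda>z. if z \<in> Zvec (p+q) then
      (\<Sum>x\<in>Zvec (p+q). \<Sum>y\<in>Zvec (p+q).
         if zadd x y = z then (-1) ^ twist p (p+q) x y * a x * b y else 0)
     else 0)"

definition homogeneous :: "nat \<Rightarrow> (bool list \<Rightarrow> real) \<Rightarrow> bool" where
  "homogeneous n a \<longleftrightarrow> (\<exists>x\<in>Zvec n. \<exists>c::real. a = (\<lambda>z. c * ubasis x z))"

text \<open>Isomorphism of real algebras O_{p,q} \<cong> O_{p',q'} (same n) preserving the graded
  structure, i.e. mapping homogeneous elements exactly onto homogeneous elements.\<close>
definition graded_iso :: "nat \<Rightarrow> nat \<Rightarrow> nat \<Rightarrow> nat \<Rightarrow> bool" where
  "graded_iso p q p' q' \<longleftrightarrow> p + q = p' + q' \<and>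
     (\<exists>\<phi>. bij_betw \<phi> (Oset (p+q)) (Oset (p'+q')) \<and>
        (\<forall>a\<in>Oset (p+q). \<forall>b\<in>Oset (p+q). \<phi> (\<lambda>z. a z + b z) = (\<lambda>z. \<phi> a z + \<phi> b z)) \<and>
        (\<forall>c::real. \<forall>a\<in>Oset (p+q). \<phi> (\<lambda>z. c * a z) = (\<lambda>z. c * \<phi> a z)) \<and>
        (\<forall>a\<in>Oset (p+q). \<forall>b\<in>Oset (p+q). \<phi> (Omul p q a b) = Omul p' q' (\<phi> a) (\<phi> b)) \<and>
        (\<forall>a\<in>Oset (p+q). homogeneous (p+q) a \<longleftrightarrow> homogeneous (p'+q') (\<phi> a)))"

end

theory Submission
  imports Defs "HOL-Library.Z2"
begin


declare add_bit_eq_xor[simp del] mult_bit_eq_and[simp del]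
lemma bit_cases: "(b::bit) = 0 \<or> b = 1" by (cases b) auto
lemma bit_idem[simp]: "(a::bit) * a = a" by (cases a) auto
lemma bit_idem2[simp]: "(a::bit) * (a * b) = a * b" by (cases a) auto
lemma bit_add_self[simp]: "(a::bit) + a = 0" by (cases a) auto
lemma bit_add_self2[simp]: "(a::bit) + (a + b) = b" by (cases a) auto
lemma bit_minus[simp]: "- (a::bit) = a" by (cases a) auto
lemma bit_diff[simp]: "(a::bit) - b = a + b" by (cases a; cases b) auto
lemma of_nat_bit: "(of_nat m :: bit) = (if even m then 0 else 1)"
  by (induction m) auto



definition S1 :: "nat \<Rightarrow> (nat \<Rightarrow> bit) \<Rightarrow> bit" where "S1 n X = (\<Sum>i<n. X i)"
definition E2 :: "nat \<Rightarrow> (nat \<Rightarrow> bit) \<Rightarrow> bit" where "E2 n X = (\<Sum>j<n. \<Sum>i<j. X i * X j)"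
definition Bf :: "nat \<Rightarrow> (nat \<Rightarrow> bit) \<Rightarrow> (nat \<Rightarrow> bit) \<Rightarrow> bit" where "Bf n X Y = (\<Sum>i<n. X i * Y i)"
definition Lf :: "nat \<Rightarrow> (nat \<Rightarrow> bit) \<Rightarrow> (nat \<Rightarrow> bit) \<Rightarrow> bit" where "Lf n X Y = (\<Sum>j<n. \<Sum>i\<le>j. X i * Y j)"
definition Cube :: "nat \<Rightarrow> (nat \<Rightarrow> bit) \<Rightarrow> (nat \<Rightarrow> bit) \<Rightarrow> bit" where
 "Cube n X Y = (\<Sum>k<n. \<Sum>j<k. \<Sum>i<j. X i * X j * Y k + X i * Y j * X k + Y i * X j * X k)"

lemma S1_Suc[simp]: "S1 (Suc n) X = S1 n X + X n" by (simp add: S1_def)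
lemma Bf_Suc[simp]: "Bf (Suc n) X Y = Bf n X Y + X n * Y n" by (simp add: Bf_def)
lemma S1_0[simp]: "S1 0 X = 0" by (simp add: S1_def)
lemma Bf_0[simp]: "Bf 0 X Y = 0" by (simp add: Bf_def)

lemma pair_sum: "(\<Sum>j<n. \<Sum>i<j. X i * Y j + Y i * X j) = S1 n X * S1 n Y + Bf n X Y"
proof (induction n)
  case 0 then show ?case by simp
next
  case (Suc n)
  have "(\<Sum>i<n. X i * Y n + Y i * X n) = S1 n X * Y n + S1 n Y * X n"
    by (simp add: S1_def sum.distrib sum_distrib_right)
  then show ?case using Suc by (simp add: algebra_simps)
qed

lemma E2_Suc[simp]: "E2 (Suc n) X = E2 n X + S1 n X * X n"
  by (simp add: E2_def S1_def sum_distrib_right)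
lemma E2_0[simp]: "E2 0 X = 0" by (simp add: E2_def)

lemma Cube_closed: "Cube n X Y = S1 n Y * E2 n X + Bf n X Y * (S1 n X + 1)"
proof (induction n)
  case 0 then show ?case by (simp add: Cube_def)
next
  case (Suc n)
  have "(\<Sum>j<n. \<Sum>i<j. X i * X j * Y n + X i * Y j * X n + Y i * X j * X n)
        = Y n * E2 n X + X n * (\<Sum>j<n. \<Sum>i<j. X i * Y j + Y i * X j)"
    by (simp add: E2_def sum.distrib sum_distrib_left algebra_simps)
  then have "Cube (Suc n) X Y = Cube n X Y + Y n * E2 n X + X n * (S1 n X * S1 n Y + Bf n X Y)"
    by (simp add: Cube_def pair_sum)
  then show ?case using Suc by (simp add: algebra_simps)
qed



lemma S1_add[simp]: "S1 n (\<lambda>i. X i + Z i) = S1 n X + S1 n Z" by (simp add: S1_def sum.distrib)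
lemma S1_scale[simp]: "S1 n (\<lambda>i. k * X i) = k * S1 n X" by (simp add: S1_def sum_distrib_left)
lemma Bf_add1[simp]: "Bf n (\<lambda>i. X i + Z i) Y = Bf n X Y + Bf n Z Y" by (simp add: Bf_def sum.distrib algebra_simps)
lemma Bf_add2[simp]: "Bf n Y (\<lambda>i. X i + Z i) = Bf n Y X + Bf n Y Z" by (simp add: Bf_def sum.distrib algebra_simps)
lemma Bf_scale1[simp]: "Bf n (\<lambda>i. k * X i) Y = k * Bf n X Y" by (simp add: Bf_def sum_distrib_left algebra_simps)
lemma Bf_scale2[simp]: "Bf n Y (\<lambda>i. k * X i) = k * Bf n Y X" by (simp add: Bf_def sum_distrib_left algebra_simps)
lemma Lf_add1[simp]: "Lf n (\<lambda>i. X i + Z i) Y = Lf n X Y + Lf n Z Y" by (simp add: Lf_def sum.distrib algebra_simps)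
lemma Lf_add2[simp]: "Lf n Y (\<lambda>i. X i + Z i) = Lf n Y X + Lf n Y Z" by (simp add: Lf_def sum.distrib algebra_simps)
lemma Lf_scale1[simp]: "Lf n (\<lambda>i. k * X i) Y = k * Lf n X Y" by (simp add: Lf_def sum_distrib_left algebra_simps)
lemma Lf_scale2[simp]: "Lf n Y (\<lambda>i. k * X i) = k * Lf n Y X" by (simp add: Lf_def sum_distrib_left algebra_simps)

lemma E2_add[simp]: "E2 n (\<lambda>i. X i + Z i) = E2 n X + E2 n Z + S1 n X * S1 n Z + Bf n X Z"
proof -
  have "E2 n (\<lambda>i. X i + Z i) = E2 n X + E2 n Z + (\<Sum>j<n. \<Sum>i<j. X i * Z j + Z i * X j)"
    by (simp add: E2_def sum.distrib algebra_simps)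
  then show ?thesis by (simp add: pair_sum add.assoc)
qed
lemma E2_scale[simp]: "E2 n (\<lambda>i. k * X i) = k * E2 n X"
  by (simp add: E2_def sum_distrib_left algebra_simps)

lemma Lf_Suc: "Lf (Suc n) X Y = Lf n X Y + S1 (Suc n) X * Y n"
proof -
  have "Lf (Suc n) X Y = Lf n X Y + (\<Sum>i\<le>n. X i * Y n)" by (simp add: Lf_def)
  moreover have "S1 (Suc n) X * Y n = (\<Sum>i\<le>n. X i * Y n)"
    by (simp add: S1_def lessThan_Suc_atMost sum_distrib_right)
  ultimately show ?thesis by simp
qed
lemma Lf_0[simp]: "Lf 0 X Y = 0" by (simp add: Lf_def)

lemma Lf_swap: "Lf n Y X = Lf n X Y + S1 n X * S1 n Y + Bf n X Y"
proof (induction n)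
  case 0 then show ?case by simp
next
  case (Suc n) then show ?case by (simp add: Lf_Suc algebra_simps)
qed

definition unit :: "nat \<Rightarrow> nat \<Rightarrow> bit" where "unit a = (\<lambda>i. if i = a then 1 else 0)"
lemma unit_apply[simp]: "unit a i = (if i = a then 1 else 0)" by (simp add: unit_def)
lemma bit_mult_if1[simp]: "(x::bit) * (if P then 1 else 0) = (if P then x else 0)" by simp
lemma bit_mult_if2[simp]: "(if P then 1 else 0) * (x::bit) = (if P then x else 0)" by simp

lemma S1_unit[simp]: "S1 n (unit a) = (if a < n then 1 else 0)"
  by (simp add: S1_def)
lemma Bf_unit2[simp]: "Bf n X (unit a) = (if a < n then X a else 0)"
  by (simp add: Bf_def)
lemma Bf_unit1[simp]: "Bf n (unit a) X = (if a < n then X a else 0)"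
  by (simp add: Bf_def)
lemma E2_unit[simp]: "E2 n (unit a) = 0"
  by (induction n) (auto simp: S1_def)
lemma Lf_unit2[simp]: "Lf n X (unit a) = (if a < n then S1 (Suc a) X else 0)"
  by (induction n) (auto simp: Lf_Suc)
lemma Lf_unit1[simp]: "Lf n (unit a) X = (if a < n then S1 (Suc a) X + S1 n X + X a else 0)"
  using Lf_swap[of n "unit a" X] by (simp add: algebra_simps)


declare unit_apply[simp del]

definition En :: "nat \<Rightarrow> nat \<Rightarrow> bit" where "En n = (\<lambda>i. if i < n then 1 else 0)"
lemma En_apply[simp]: "En n i = (if i < n then 1 else 0)" by (simp add: En_def)

lemma Bf_En2[simp]: "m \<le> n \<Longrightarrow> Bf m X (En n) = S1 m X"
  by (induction m) auto
lemma Bf_En1[simp]: "m \<le> n \<Longrightarrow> Bf m (En n) X = S1 m X"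
  by (induction m) auto
lemma S1_En[simp]: "m \<le> n \<Longrightarrow> S1 m (En n) = of_nat m"
  by (induction m) auto
lemma E2_En: "m \<le> n \<Longrightarrow> E2 m (En n) = (\<Sum>j<m. of_nat j)"
  by (induction m) auto
lemma Lf_En: "m \<le> n \<Longrightarrow> Lf m (En n) (En n) = (\<Sum>j<m. of_nat (Suc j))"
  by (induction m) (auto simp: Lf_Suc)
declare En_apply[simp del]

lemma sum4_a: "(\<Sum>j<4*k. (of_nat j :: bit)) = 0"
proof (induction k)
  case 0 then show ?case by simp
next
  case (Suc k)
  have e: "4 * Suc k = Suc (Suc (Suc (Suc (4*k))))" by simp
  show ?case unfolding e using Suc by (simp add: algebra_simps)
qed
lemma sum4_b: "(\<Sum>j<4*k. (of_nat (Suc j) :: bit)) = 0"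
proof (induction k)
  case 0 then show ?case by simp
next
  case (Suc k)
  have e: "4 * Suc k = Suc (Suc (Suc (Suc (4*k))))" by simp
  show ?case unfolding e using Suc by (simp add: algebra_simps)
qed

definition tw :: "nat \<Rightarrow> nat \<Rightarrow> (nat \<Rightarrow> bit) \<Rightarrow> (nat \<Rightarrow> bit) \<Rightarrow> bit" where
  "tw n p X Y = S1 n Y * E2 n X + Bf n X Y * (S1 n X + 1) + Lf n X Y + Bf p X Y"
definition sig :: "nat \<Rightarrow> (nat \<Rightarrow> bit) \<Rightarrow> (nat \<Rightarrow> bit) \<Rightarrow> (nat \<Rightarrow> bit) \<Rightarrow> nat \<Rightarrow> bit" where
  "sig n A C X = (\<lambda>i. X i + Bf n X A * C i + Bf n X C * A i)"



lemma case2: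
  fixes X Y :: "nat \<Rightarrow> bit"
  assumes n: "n = 4*k" and p: "odd p" and pn: "Suc p < n"
  defines "C2 \<equiv> (\<lambda>i. unit p i + unit (Suc p) i)"
  defines "s \<equiv> (\<lambda>X::nat\<Rightarrow>bit. X p * X (Suc p) + (X p + X (Suc p)) * (Lf n X (En n) + S1 (Suc (Suc p)) X) + S1 n X * X p)"
  shows "tw n (Suc (Suc p)) (sig n (En n) C2 X) (sig n (En n) C2 Y) + s X + s Y = tw n p X Y + s (\<lambda>i. X i + Y i)"
proof -
  have pn': "p < n" "p \<le> n" "Suc p \<le> n" "Suc (Suc p) \<le> n" using pn by auto
  have En0: "S1 n (En n) = 0" using n by (simp add: of_nat_bit)
  have En1: "E2 n (En n) = 0" using n by (simp add: E2_En sum4_a)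
  have En2: "Lf n (En n) (En n) = 0" using n Lf_En[of n n] sum4_b[of k] by simp
  have En3: "Bf (Suc (Suc p)) (En n) (En n) = 1" using p pn by (simp add: of_nat_bit En_apply)
  have En4: "Bf n Z (En n) = S1 n Z" "Bf n (En n) Z = S1 n Z" for Z by simp_all
  have En5: "Bf (Suc (Suc p)) Z (En n) = S1 (Suc (Suc p)) Z" "Bf (Suc (Suc p)) (En n) Z = S1 (Suc (Suc p)) Z" for Z
    using pn' by (simp_all del: Bf_Suc S1_Suc)
  have LEX: "Lf n (En n) X = Lf n X (En n) + S1 n X" and LEY: "Lf n (En n) Y = Lf n Y (En n) + S1 n Y"
    using Lf_swap[of n "En n" X] Lf_swap[of n "En n" Y] En0 En4 by simp_all
  have C2a: "C2 p = 1" "C2 (Suc p) = 1" by (simp_all add: C2_def unit_apply)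
  have u1: "unit p (Suc p) = 0" "unit (Suc p) p = 0" by (simp_all add: unit_def)
  have C2b: "S1 n C2 = 0" "E2 n C2 = 1" using pn' by (simp_all add: C2_def u1)
  have C2c: "Bf n Z C2 = Z p + Z (Suc p)" "Bf n C2 Z = Z p + Z (Suc p)"
      "Bf (Suc (Suc p)) Z C2 = Z p + Z (Suc p)" "Bf (Suc (Suc p)) C2 Z = Z p + Z (Suc p)" for Z
    using pn' by (simp_all add: C2_def del: Bf_Suc)
  have C2d: "Lf n Z C2 = Z (Suc p)" for Z using pn' by (simp add: C2_def)
  have C2e: "Lf n C2 Z = Z p" for Z using Lf_swap[of n C2 Z] C2b C2c C2d by simp
  have C2f: "En n p = 1" "En n (Suc p) = 1" using pn' by (simp_all add: En_apply)
  have C2g: "S1 (Suc (Suc p)) C2 = 0" "S1 (Suc (Suc p)) (En n) = 1"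
    using pn' p by (simp_all add: C2_def u1 of_nat_bit En_apply)
  note facts = En0 En1 En2 En3 En4 En5 LEX LEY C2a C2b C2c C2d C2e C2f C2g
  show ?thesis
    unfolding tw_def sig_def s_def
    apply (simp only: facts)
    apply (simp add: facts del: S1_Suc Bf_Suc)
    apply (simp add: algebra_simps)
    done
qed



lemma unit_same[simp]: "unit a a = 1" by (simp add: unit_def)
lemma unit_neq[simp]: "b \<noteq> a \<Longrightarrow> unit a b = 0" by (simp add: unit_def)

lemma case1:
  fixes X Y :: "nat \<Rightarrow> bit"
  assumes pn: "Suc (Suc (Suc (Suc (Suc r)))) < n"
  defines "A \<equiv> (\<lambda>i. unit r i + unit (Suc r) i + unit (Suc (Suc r)) i + unit (Suc (Suc (Suc (Suc (Suc r))))) i)"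
  defines "C \<equiv> (\<lambda>i. unit (Suc r) i + unit (Suc (Suc r)) i + unit (Suc (Suc (Suc r))) i + unit (Suc (Suc (Suc (Suc r)))) i)"
  defines "s \<equiv> (\<lambda>X::nat\<Rightarrow>bit.
     X (Suc r) * X (Suc (Suc r)) + X (Suc r) * X (Suc (Suc (Suc r))) + X (Suc r) * X (Suc (Suc (Suc (Suc r))))
   + X (Suc (Suc r)) * X (Suc (Suc (Suc r))) + X (Suc (Suc r)) * X (Suc (Suc (Suc (Suc r))))
   + X (Suc (Suc (Suc r))) * X (Suc (Suc (Suc (Suc r))))
   + (X (Suc (Suc r)) + X (Suc (Suc (Suc (Suc r))))) * Bf n X A
   + (X r + X (Suc (Suc r)) + X (Suc (Suc (Suc r))) + X (Suc (Suc (Suc (Suc r)))) + X (Suc (Suc (Suc (Suc (Suc r)))))) * Bf n X C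
   + Bf n X A * Bf n X C)"
  shows "tw n (Suc (Suc (Suc (Suc (Suc r))))) (sig n A C X) (sig n A C Y) + s X + s Y = tw n (Suc r) X Y + s (\<lambda>i. X i + Y i)"
proof -
  have pn': "r < n" "Suc r < n" "Suc (Suc r) < n" "Suc (Suc (Suc r)) < n" "Suc (Suc (Suc (Suc r))) < n"
    using pn by auto
  show ?thesis
    unfolding tw_def sig_def s_def A_def C_def
    using pn pn'
    apply (simp del: S1_Suc Bf_Suc)
    apply (simp add: algebra_simps)
    done
qed



definition vb :: "nat \<Rightarrow> bool list \<Rightarrow> nat \<Rightarrow> bit" where
  "vb n x = (\<lambda>i. if i < n then of_bool (x ! i) else 0)"

lemma of_nat_zbit: "(of_nat (zbit x i) :: bit) = of_bool (x ! i)" by (simp add: zbit_def)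

lemma twist_cb:
  "(of_nat (twist p n x y) :: bit) = Cube n (\<lambda>i. of_bool (x ! i)) (\<lambda>i. of_bool (y ! i)) + Lf n (\<lambda>i. of_bool (x ! i)) (\<lambda>i. of_bool (y ! i)) + Bf p (\<lambda>i. of_bool (x ! i)) (\<lambda>i. of_bool (y ! i))"
  unfolding twist_def Cube_def Lf_def Bf_def
  by (simp only: of_nat_zbit of_nat_add of_nat_mult of_nat_sum)

lemma S1_cong: "\<forall>i<n. X i = X' i \<Longrightarrow> S1 n X = S1 n X'"
  unfolding S1_def by (auto intro!: sum.cong)
lemma E2_cong: "\<forall>i<n. X i = X' i \<Longrightarrow> E2 n X = E2 n X'"
  unfolding E2_def by (auto intro!: sum.cong)
lemma Bf_cong: "\<forall>i<n. X i = X' i \<Longrightarrow> \<forall>i<n. Y i = Y' i \<Longrightarrow> p \<le> n \<Longrightarrow> Bf p X Y = Bf p X' Y'"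
  unfolding Bf_def by (auto intro!: sum.cong)
lemma Lf_cong: "\<forall>i<n. X i = X' i \<Longrightarrow> \<forall>i<n. Y i = Y' i \<Longrightarrow> Lf n X Y = Lf n X' Y'"
  unfolding Lf_def by (auto intro!: sum.cong)
lemma tw_cong: "\<forall>i<n. X i = X' i \<Longrightarrow> \<forall>i<n. Y i = Y' i \<Longrightarrow> p \<le> n \<Longrightarrow> tw n p X Y = tw n p X' Y'"
  unfolding tw_def using S1_cong[of n X X'] S1_cong[of n Y Y'] E2_cong[of n X X'] Bf_cong[of n X X' Y Y' n]
    Bf_cong[of n X X' Y Y' p] Lf_cong[of n X X' Y Y'] by simp

lemma twist_bit: "p \<le> n \<Longrightarrow> (of_nat (twist p n x y) :: bit) = tw n p (vb n x) (vb n y)"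
  unfolding twist_cb Cube_closed
  by (subst tw_cong[of n _ "\<lambda>i. of_bool (x ! i)" _ "\<lambda>i. of_bool (y ! i)"]) (auto simp: vb_def tw_def)


definition sigl :: "nat \<Rightarrow> (nat \<Rightarrow> bit) \<Rightarrow> (nat \<Rightarrow> bit) \<Rightarrow> bool list \<Rightarrow> bool list" where
  "sigl n A C x = map (\<lambda>i. sig n A C (vb n x) i = 1) [0..<n]"

lemma bit_of_bool_eq1[simp]: "of_bool ((b::bit) = 1) = b" by (cases b) auto
lemma bit_of_bool_neq: "(of_bool (a \<noteq> b) :: bit) = of_bool a + of_bool b" by (cases a; cases b) auto

lemma sigl_Zvec: "sigl n A C x \<in> Zvec n" by (simp add: sigl_def Zvec_def)

lemma vb_sigl:
  assumes "\<forall>i\<ge>n. A i = 0" "\<forall>i\<ge>n. C i = 0"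
  shows "vb n (sigl n A C x) = sig n A C (vb n x)"
proof
  fix i show "vb n (sigl n A C x) i = sig n A C (vb n x) i"
    using assms by (cases "i < n") (auto simp: vb_def sigl_def sig_def)
qed

lemma vb_inj: "x \<in> Zvec n \<Longrightarrow> y \<in> Zvec n \<Longrightarrow> vb n x = vb n y \<Longrightarrow> x = y"
proof (rule nth_equalityI)
  assume x: "x \<in> Zvec n" and y: "y \<in> Zvec n" and e: "vb n x = vb n y"
  show "length x = length y" using x y by (simp add: Zvec_def)
  fix i assume "i < length x"
  then have "i < n" using x by (simp add: Zvec_def)
  then have "(of_bool (x ! i) :: bit) = of_bool (y ! i)" using fun_cong[OF e, of i] by (simp add: vb_def)
  then show "x ! i = y ! i" by (cases "x ! i"; cases "y ! i") auto
qed

lemma zadd_Zvec: "x \<in> Zvec n \<Longrightarrow> y \<in> Zvec n \<Longrightarrow> zadd x y \<in> Zvec n"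
  by (simp add: Zvec_def zadd_def)

lemma vb_zadd: "x \<in> Zvec n \<Longrightarrow> y \<in> Zvec n \<Longrightarrow> vb n (zadd x y) = (\<lambda>i. vb n x i + vb n y i)"
  by (auto simp: Zvec_def zadd_def vb_def bit_of_bool_neq)

lemma sig_add: "sig n A C (\<lambda>i. X i + Y i) = (\<lambda>i. sig n A C X i + sig n A C Y i)"
  by (simp add: sig_def algebra_simps)

lemma sig_inv:
  assumes "Bf n A A = 0" "Bf n C C = 0" "Bf n A C = 0" "Bf n C A = 0"
  shows "sig n A C (sig n A C X) = X"
  using assms unfolding sig_def by simp



lemma Zvec_finite: "finite (Zvec n)"
proof -
  have "Zvec n = {xs. set xs \<subseteq> (UNIV::bool set) \<and> length xs = n}" by (simp add: Zvec_def)
  then show ?thesis using finite_lists_length_eq[of "UNIV::bool set" n] by simp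
qed

lemma graded_iso_intro:
  fixes \<sigma> :: "bool list \<Rightarrow> bool list" and g :: "bool list \<Rightarrow> real"
  assumes pq: "p + q = n" "p' + q' = n"
    and sZ: "\<And>x. x \<in> Zvec n \<Longrightarrow> \<sigma> x \<in> Zvec n"
    and sinv: "\<And>x. x \<in> Zvec n \<Longrightarrow> \<sigma> (\<sigma> x) = x"
    and sadd: "\<And>x y. x \<in> Zvec n \<Longrightarrow> y \<in> Zvec n \<Longrightarrow> \<sigma> (zadd x y) = zadd (\<sigma> x) (\<sigma> y)"
    and g: "\<And>x. g x * g x = 1"
    and key: "\<And>x y. x \<in> Zvec n \<Longrightarrow> y \<in> Zvec n \<Longrightarrow>
       (-1::real) ^ twist p' n (\<sigma> x) (\<sigma> y) * (g x * g y) = (-1) ^ twist p n x y * g (zadd x y)"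
  shows "graded_iso p q p' q'"
proof -
  define \<phi> where "\<phi> a = (\<lambda>z. if z \<in> Zvec n then g (\<sigma> z) * a (\<sigma> z) else 0)" for a :: "bool list \<Rightarrow> real"
  have \<phi>O: "\<phi> a \<in> Oset n" for a by (simp add: \<phi>_def Oset_def)
  define \<psi> where "\<psi> b = (\<lambda>z. if z \<in> Zvec n then g z * b (\<sigma> z) else 0)" for b :: "bool list \<Rightarrow> real"
  have \<psi>O: "\<psi> a \<in> Oset n" for a by (simp add: \<psi>_def Oset_def)
  have \<psi>\<phi>: "\<psi> (\<phi> a) = a" if "a \<in> Oset n" for a
  proof
    fix z show "\<psi> (\<phi> a) z = a z"
    proof (cases "z \<in> Zvec n")
      case True
      then have "\<psi> (\<phi> a) z = (g z * g z) * a z" using sZ sinv by (simp add: \<phi>_def \<psi>_def)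
      then show ?thesis using g by simp
    next
      case False then show ?thesis using that by (simp add: \<psi>_def Oset_def)
    qed
  qed
  have \<phi>\<psi>: "\<phi> (\<psi> a) = a" if "a \<in> Oset n" for a
  proof
    fix z show "\<phi> (\<psi> a) z = a z"
    proof (cases "z \<in> Zvec n")
      case True
      then have "\<phi> (\<psi> a) z = (g (\<sigma> z) * g (\<sigma> z)) * a z" using sZ sinv by (simp add: \<phi>_def \<psi>_def)
      then show ?thesis using g by simp
    next
      case False then show ?thesis using that by (simp add: \<phi>_def Oset_def)
    qed
  qed
  have bij: "bij_betw \<phi> (Oset n) (Oset n)"
    by (rule bij_betw_byWitness[where f'=\<psi>]) (use \<phi>\<psi> \<psi>\<phi> \<phi>O \<psi>O in auto)
  have sbij: "bij_betw \<sigma> (Zvec n) (Zvec n)"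
    by (rule bij_betw_byWitness[where f'=\<sigma>]) (use sinv sZ in auto)
  have addp: "\<phi> (\<lambda>z. a z + b z) = (\<lambda>z. \<phi> a z + \<phi> b z)" for a b
    by (auto simp: \<phi>_def algebra_simps)
  have scal: "\<phi> (\<lambda>z. c * a z) = (\<lambda>z. c * \<phi> a z)" for c a
    by (auto simp: \<phi>_def algebra_simps)
  have mult: "\<phi> (Omul p q a b) = Omul p' q' (\<phi> a) (\<phi> b)" for a b
  proof
    fix z
    show "\<phi> (Omul p q a b) z = Omul p' q' (\<phi> a) (\<phi> b) z"
    proof (cases "z \<in> Zvec n")
      case False then show ?thesis using pq by (simp add: \<phi>_def Omul_def)
    next
      case z: True
      have sz: "\<sigma> z \<in> Zvec n" using sZ z by simp
      have L: "\<phi> (Omul p q a b) z = g (\<sigma> z) * (\<Sum>x\<in>Zvec n. \<Sum>y\<in>Zvec n.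
          if zadd x y = \<sigma> z then (-1) ^ twist p n x y * a x * b y else 0)"
        unfolding Omul_def pq using z sz by (simp add: \<phi>_def)
      have "Omul p' q' (\<phi> a) (\<phi> b) z = (\<Sum>x'\<in>Zvec n. \<Sum>y'\<in>Zvec n.
          if zadd x' y' = z then (-1) ^ twist p' n x' y' * \<phi> a x' * \<phi> b y' else 0)"
        unfolding Omul_def pq using z by simp
      also have "\<dots> = (\<Sum>x\<in>Zvec n. \<Sum>y'\<in>Zvec n.
          if zadd (\<sigma> x) y' = z then (-1) ^ twist p' n (\<sigma> x) y' * \<phi> a (\<sigma> x) * \<phi> b y' else 0)"
        by (rule sum.reindex_bij_betw[OF sbij, symmetric])
      also have "\<dots> = (\<Sum>x\<in>Zvec n. \<Sum>y\<in>Zvec n.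
          if zadd (\<sigma> x) (\<sigma> y) = z then (-1) ^ twist p' n (\<sigma> x) (\<sigma> y) * \<phi> a (\<sigma> x) * \<phi> b (\<sigma> y) else 0)"
        by (rule sum.cong[OF refl], rule sum.reindex_bij_betw[OF sbij, symmetric])
      also have "\<dots> = (\<Sum>x\<in>Zvec n. \<Sum>y\<in>Zvec n. g (\<sigma> z) *
          (if zadd x y = \<sigma> z then (-1) ^ twist p n x y * a x * b y else 0))"
      proof (intro sum.cong refl)
        fix x y assume x: "x \<in> Zvec n" and y: "y \<in> Zvec n"
        have xy: "zadd x y \<in> Zvec n" using x y by (simp add: Zvec_def zadd_def)
        have c: "zadd (\<sigma> x) (\<sigma> y) = z \<longleftrightarrow> zadd x y = \<sigma> z"
          using sadd[OF x y] sinv[OF xy] sinv[OF z] by metis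
        have pa: "\<phi> a (\<sigma> x) = g x * a x" "\<phi> b (\<sigma> y) = g y * b y"
          using sZ sinv x y by (simp_all add: \<phi>_def)
        show "(if zadd (\<sigma> x) (\<sigma> y) = z then (-1) ^ twist p' n (\<sigma> x) (\<sigma> y) * \<phi> a (\<sigma> x) * \<phi> b (\<sigma> y) else 0) =
          g (\<sigma> z) * (if zadd x y = \<sigma> z then (-1) ^ twist p n x y * a x * b y else 0)"
        proof (cases "zadd x y = \<sigma> z")
          case True
          have "(-1::real) ^ twist p' n (\<sigma> x) (\<sigma> y) * \<phi> a (\<sigma> x) * \<phi> b (\<sigma> y)
              = ((-1) ^ twist p' n (\<sigma> x) (\<sigma> y) * (g x * g y)) * (a x * b y)"
            unfolding pa by (simp add: algebra_simps)
          also have "\<dots> = g (\<sigma> z) * ((-1) ^ twist p n x y * a x * b y)"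
            unfolding key[OF x y] True by (simp add: algebra_simps)
          finally show ?thesis using c True by simp
        next
          case False then show ?thesis using c by simp
        qed
      qed
      also have "\<dots> = g (\<sigma> z) * (\<Sum>x\<in>Zvec n. \<Sum>y\<in>Zvec n.
          if zadd x y = \<sigma> z then (-1) ^ twist p n x y * a x * b y else 0)"
        by (simp add: sum_distrib_left)
      finally show ?thesis using L by simp
    qed
  qed
  have hf: "\<phi> (\<lambda>z. c * ubasis x z) = (\<lambda>z. (c * g x) * ubasis (\<sigma> x) z)" if x: "x \<in> Zvec n" for c x
  proof
    fix z show "\<phi> (\<lambda>z. c * ubasis x z) z = (c * g x) * ubasis (\<sigma> x) z"
    proof (cases "z \<in> Zvec n")
      case True
      have "\<sigma> z = x \<longleftrightarrow> z = \<sigma> x" using sinv[OF True] sinv[OF x] by metis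
      then show ?thesis using True sinv[OF x] by (auto simp: \<phi>_def ubasis_def)
    next
      case False
      then have "z \<noteq> \<sigma> x" using sZ[OF x] by auto
      then show ?thesis using False by (simp add: \<phi>_def ubasis_def)
    qed
  qed
  have hg: "\<psi> (\<lambda>z. c * ubasis x z) = (\<lambda>z. (c * g (\<sigma> x)) * ubasis (\<sigma> x) z)" if x: "x \<in> Zvec n" for c x
  proof
    fix z show "\<psi> (\<lambda>z. c * ubasis x z) z = (c * g (\<sigma> x)) * ubasis (\<sigma> x) z"
    proof (cases "z \<in> Zvec n")
      case True
      have "\<sigma> z = x \<longleftrightarrow> z = \<sigma> x" using sinv[OF True] sinv[OF x] by metis
      then show ?thesis using True sinv[OF x] by (auto simp: \<psi>_def ubasis_def)
    next
      case False
      then have "z \<noteq> \<sigma> x" using sZ[OF x] by auto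
      then show ?thesis using False by (simp add: \<psi>_def ubasis_def)
    qed
  qed
  have hfwd: "homogeneous n (\<phi> a)" if h: "homogeneous n a" for a
  proof -
    obtain x c where x: "x \<in> Zvec n" and a: "a = (\<lambda>z. c * ubasis x z)"
      using h unfolding homogeneous_def by blast
    show ?thesis unfolding homogeneous_def a hf[OF x] using sZ[OF x] by blast
  qed
  have hbwd: "homogeneous n (\<psi> a)" if h: "homogeneous n a" for a
  proof -
    obtain x c where x: "x \<in> Zvec n" and a: "a = (\<lambda>z. c * ubasis x z)"
      using h unfolding homogeneous_def by blast
    show ?thesis unfolding homogeneous_def a hg[OF x] using sZ[OF x] by blast
  qed
  have hom: "homogeneous n a \<longleftrightarrow> homogeneous n (\<phi> a)" if "a \<in> Oset n" for a
    using hfwd[of a] hbwd[of "\<phi> a"] \<psi>\<phi>[OF that] by auto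
  show ?thesis
    unfolding graded_iso_def
    apply (rule conjI) using pq apply simp
    apply (rule exI[of _ \<phi>])
    using bij addp scal mult hom pq by simp
qed



definition sgnb :: "bit \<Rightarrow> real" where "sgnb b = (if b = 0 then 1 else -1)"

lemma sgnb_add: "sgnb (a + b) = sgnb a * sgnb b"
  by (cases a; cases b) (auto simp: sgnb_def)
lemma sgnb_sq: "sgnb b * sgnb b = 1" by (simp add: sgnb_def)
lemma minus_one_pow: "(-1::real) ^ m = sgnb (of_nat m)"
  by (simp add: sgnb_def of_nat_bit)

lemma iso_from_bit:
  assumes pq: "p + q = n" "p' + q' = n"
    and A0: "\<forall>i\<ge>n. A i = 0" and C0: "\<forall>i\<ge>n. C i = 0"
    and inv: "Bf n A A = 0" "Bf n C C = 0" "Bf n A C = 0" "Bf n C A = 0"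
    and ident: "\<And>X Y. tw n p' (sig n A C X) (sig n A C Y) + s X + s Y = tw n p X Y + s (\<lambda>i. X i + Y i)"
  shows "graded_iso p q p' q'"
proof (rule graded_iso_intro[where \<sigma>="sigl n A C" and g="\<lambda>x. sgnb (s (vb n x))"])
  show "p + q = n" "p' + q' = n" by (fact pq)+
  have vs: "vb n (sigl n A C x) = sig n A C (vb n x)" for x using vb_sigl[OF A0 C0] .
  show sZ: "sigl n A C x \<in> Zvec n" for x by (rule sigl_Zvec)
  show "sigl n A C (sigl n A C x) = x" if x: "x \<in> Zvec n" for x
    by (rule vb_inj[OF sigl_Zvec x]) (simp add: vs sig_inv[OF inv])
  show "sigl n A C (zadd x y) = zadd (sigl n A C x) (sigl n A C y)" if x: "x \<in> Zvec n" and y: "y \<in> Zvec n" for x y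
    by (rule vb_inj[OF sigl_Zvec zadd_Zvec[OF sigl_Zvec sigl_Zvec]])
      (simp add: vs vb_zadd[OF x y] vb_zadd[OF sigl_Zvec sigl_Zvec] sig_add)
  show "sgnb (s (vb n x)) * sgnb (s (vb n x)) = 1" for x by (rule sgnb_sq)
  show "(-1::real) ^ twist p' n (sigl n A C x) (sigl n A C y) * (sgnb (s (vb n x)) * sgnb (s (vb n y))) =
        (-1) ^ twist p n x y * sgnb (s (vb n (zadd x y)))" if x: "x \<in> Zvec n" and y: "y \<in> Zvec n" for x y
  proof -
    have p1: "p \<le> n" "p' \<le> n" using pq by auto
    have "(-1::real) ^ twist p' n (sigl n A C x) (sigl n A C y) * (sgnb (s (vb n x)) * sgnb (s (vb n y)))
       = sgnb (tw n p' (sig n A C (vb n x)) (sig n A C (vb n y)) + s (vb n x) + s (vb n y))"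
      by (simp add: minus_one_pow twist_bit[OF p1(2)] vs sgnb_add)
    also have "\<dots> = sgnb (tw n p (vb n x) (vb n y) + s (vb n (zadd x y)))"
      by (simp add: ident vb_zadd[OF x y])
    also have "\<dots> = (-1) ^ twist p n x y * sgnb (s (vb n (zadd x y)))"
      by (simp add: minus_one_pow twist_bit[OF p1(1)] sgnb_add)
    finally show ?thesis .
  qed
qed



theorem mainTheorem6:
  fixes p q k :: nat
  assumes "k \<ge> 1" and "p + q = 4 * k"
  shows "(even p \<and> even q \<and> p \<ge> 2 \<and> q \<ge> 6 \<longrightarrow> graded_iso p q (p + 4) (q - 4)) \<and>
         (odd p \<and> odd q \<and> p \<ge> 1 \<and> q \<ge> 3 \<longrightarrow> graded_iso p q (p + 2) (q - 2))"
proof (intro conjI impI)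
  define n where "n = p + q"
  assume h: "even p \<and> even q \<and> p \<ge> 2 \<and> q \<ge> 6"
  obtain r where r: "p = Suc r" using h by (cases p) auto
  define A where "A \<equiv> (\<lambda>i. unit r i + unit (Suc r) i + unit (Suc (Suc r)) i + unit (Suc (Suc (Suc (Suc (Suc r))))) i)"
  define C where "C \<equiv> (\<lambda>i. unit (Suc r) i + unit (Suc (Suc r)) i + unit (Suc (Suc (Suc r))) i + unit (Suc (Suc (Suc (Suc r)))) i)"
  define s where "s \<equiv> (\<lambda>X::nat\<Rightarrow>bit.
     X (Suc r) * X (Suc (Suc r)) + X (Suc r) * X (Suc (Suc (Suc r))) + X (Suc r) * X (Suc (Suc (Suc (Suc r))))
   + X (Suc (Suc r)) * X (Suc (Suc (Suc r))) + X (Suc (Suc r)) * X (Suc (Suc (Suc (Suc r))))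
   + X (Suc (Suc (Suc r))) * X (Suc (Suc (Suc (Suc r))))
   + (X (Suc (Suc r)) + X (Suc (Suc (Suc (Suc r))))) * Bf n X A
   + (X r + X (Suc (Suc r)) + X (Suc (Suc (Suc r))) + X (Suc (Suc (Suc (Suc r)))) + X (Suc (Suc (Suc (Suc (Suc r)))))) * Bf n X C
   + Bf n X A * Bf n X C)"
  have pn: "Suc (Suc (Suc (Suc (Suc r)))) < n" using h r n_def by simp
  have pn': "r < n" "Suc r < n" "Suc (Suc r) < n" "Suc (Suc (Suc r)) < n" "Suc (Suc (Suc (Suc r))) < n"
    using pn by auto
  have e: "p + 4 = Suc (Suc (Suc (Suc (Suc r))))" using r by simp
  show "graded_iso p q (p + 4) (q - 4)"
    unfolding e
  proof (rule iso_from_bit[where n=n and A=A and C=C and s=s])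
    show "p + q = n" "Suc (Suc (Suc (Suc (Suc r)))) + (q - 4) = n" using n_def h r by auto
    show "\<forall>i\<ge>n. A i = 0" "\<forall>i\<ge>n. C i = 0" using pn pn' by (auto simp: A_def C_def)
    show "Bf n A A = 0" "Bf n C C = 0" "Bf n A C = 0" "Bf n C A = 0"
      using pn pn' by (simp_all add: A_def C_def)
    show "tw n (Suc (Suc (Suc (Suc (Suc r))))) (sig n A C X) (sig n A C Y) + s X + s Y = tw n p X Y + s (\<lambda>i. X i + Y i)" for X Y
      using case1[OF pn, of X Y] unfolding r A_def C_def s_def by simp
  qed
next
  define n where "n = p + q"
  assume h: "odd p \<and> odd q \<and> p \<ge> 1 \<and> q \<ge> 3"
  define C2 where "C2 \<equiv> (\<lambda>i. unit p i + unit (Suc p) i)"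
  define s where "s \<equiv> (\<lambda>X::nat\<Rightarrow>bit. X p * X (Suc p) + (X p + X (Suc p)) * (Lf n X (En n) + S1 (Suc (Suc p)) X) + S1 n X * X p)"
  have pn: "Suc p < n" using h n_def by simp
  have n: "n = 4 * k" using assms n_def by simp
  have e: "p + 2 = Suc (Suc p)" by simp
  show "graded_iso p q (p + 2) (q - 2)"
    unfolding e
  proof (rule iso_from_bit[where n=n and A="En n" and C=C2 and s=s])
    show "p + q = n" "Suc (Suc p) + (q - 2) = n" using n_def h by auto
    show "\<forall>i\<ge>n. En n i = 0" "\<forall>i\<ge>n. C2 i = 0" using pn by (auto simp: C2_def En_apply)
    show "Bf n (En n) (En n) = 0" "Bf n C2 C2 = 0" "Bf n (En n) C2 = 0" "Bf n C2 (En n) = 0"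
      using pn n by (simp_all add: C2_def of_nat_bit En_apply)
    show "tw n (Suc (Suc p)) (sig n (En n) C2 X) (sig n (En n) C2 Y) + s X + s Y = tw n p X Y + s (\<lambda>i. X i + Y i)" for X Y
      using case2[OF n _ pn, of X Y] h unfolding C2_def s_def by simp
  qed
qed



end
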